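(* Suppose $z\in\mathbb{Z}[i]\setminus\{0\}$ is $2$-powerfully unitarily $t$-perfect in $\mathbb{Z}[i]$ for some integer $t\ge 2$, i.e. $I_2^*(z)=t$. Then we may write $z=(1+i)^{\gamma}x$ with $\gamma$ a nonnegative integer, $x\in\mathbb{Z}[i]$ and $N(x)=x\bar x$ odd. Moreover, $x$ has exactly $\gamma+\upsilon_2(t)$ pairwise nonassociated prime divisors, where $\upsilon_2(t)$ is the exponent of $2$ in $t$.
   Context: Work in the Gaussian integers $\mathbb{Z}[i]=\mathcal O_{\mathbb{Q}(\sqrt{-1})}$, a unique factorization domain. $|z|=\sqrt{z\bar z}$, $\arg(z)\in[0,2\pi)$. Let $A$ be the set of nonzero $z\in\mathbb{Z}[i]$ with $0\le \arg(z)<\pi/2$. Two elements are relatively prime if they have no nonunit common divisor. For nonzero $x,z$, write $x\Diamond z$ iff $x\in A$, $x\mid z$, and $x$ is relatively prime to $z/x$. For $m\in\mathbb{Z}$ define $\delta_m^*(z)=\sum_{x\Diamond z}|x|^m$ and $I_m^*(z)=\delta_m^*(z)/|z|^m$. *)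

theory Defs
  imports "HOL-Analysis.Analysis"
begin

text \<open>Gaussian integers are represented as complex numbers with integer real and imaginary parts.\<close>

definition gint :: "complex \<Rightarrow> bool" where
  "gint z \<longleftrightarrow> Re z \<in> \<int> \<and> Im z \<in> \<int>"

definition gdvd :: "complex \<Rightarrow> complex \<Rightarrow> bool" where
  "gdvd x z \<longleftrightarrow> (\<exists>y. gint y \<and> z = x * y)"

definition gunit :: "complex \<Rightarrow> bool" where
  "gunit u \<longleftrightarrow> gint u \<and> gdvd u 1"

definition gassoc :: "complex \<Rightarrow> complex \<Rightarrow> bool" where
  "gassoc p q \<longleftrightarrow> gdvd p q \<and> gdvd q p"

definition gprime :: "complex \<Rightarrow> bool" where
  "gprime p \<longleftrightarrow> gint p \<and> p \<noteq> 0 \<and> \<not> gunit p \<and>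
     (\<forall>a b. gint a \<and> gint b \<and> gdvd p (a * b) \<longrightarrow> gdvd p a \<or> gdvd p b)"

definition grelprime :: "complex \<Rightarrow> complex \<Rightarrow> bool" where
  "grelprime x y \<longleftrightarrow> (\<forall>d. gint d \<and> gdvd d x \<and> gdvd d y \<longrightarrow> gunit d)"

text \<open>The set A: nonzero Gaussian integers with 0 <= arg z < pi/2. Isabelle's Arg takes values
  in (-pi, pi], which contains [0, pi/2), so this agrees with the convention arg in [0, 2 pi).\<close>
definition gA :: "complex set" where
  "gA = {z. gint z \<and> z \<noteq> 0 \<and> 0 \<le> Arg z \<and> Arg z < pi / 2}"

definition udiv :: "complex \<Rightarrow> complex \<Rightarrow> bool" where
  "udiv x z \<longleftrightarrow> x \<in> gA \<and> gdvd x z \<and> grelprime x (z / x)"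

definition delta_star :: "int \<Rightarrow> complex \<Rightarrow> real" where
  "delta_star m z = (\<Sum>x\<in>{x. udiv x z}. cmod x powi m)"

definition I_star :: "int \<Rightarrow> complex \<Rightarrow> real" where
  "I_star m z = delta_star m z / (cmod z powi m)"

end

theory Submission
  imports Defs "HOL-Computational_Algebra.Primes" "HOL-Computational_Algebra.Euclidean_Algorithm"
begin

lemma gint_Complex_int: "gint (Complex (of_int a) (of_int b))"
  by (simp add: gint_def)

lemma gint_0 [simp]: "gint 0" and gint_1 [simp]: "gint 1" and gint_ii [simp]: "gint \<i>"
  by (simp_all add: gint_def)

lemma gint_add: "gint a \<Longrightarrow> gint b \<Longrightarrow> gint (a + b)"
  and gint_diff: "gint a \<Longrightarrow> gint b \<Longrightarrow> gint (a - b)"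
  and gint_uminus: "gint a \<Longrightarrow> gint (- a)"
  and gint_mult: "gint a \<Longrightarrow> gint b \<Longrightarrow> gint (a * b)"
  and gint_cnj: "gint a \<Longrightarrow> gint (cnj a)"
  by (auto simp: gint_def)

lemma gint_power: "gint a \<Longrightarrow> gint (a ^ n)"
  by (induction n) (auto intro: gint_mult)

lemma gint_Re_floor: "gint z \<Longrightarrow> of_int \<lfloor>Re z\<rfloor> = Re z"
  and gint_Im_floor: "gint z \<Longrightarrow> of_int \<lfloor>Im z\<rfloor> = Im z"
  by (auto simp: gint_def elim!: Ints_cases)

lemma gint_round: "gint z \<Longrightarrow> Complex (of_int (round (Re z))) (of_int (round (Im z))) = z"
  by (auto simp: gint_def complex_eq_iff elim!: Ints_cases)

typedef gauss = "{z::complex. gint z}" morphisms gc gauss_of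
  by (rule exI[of _ 0]) simp

setup_lifting type_definition_gauss

instantiation gauss :: comm_ring_1
begin
lift_definition zero_gauss :: gauss is 0 by simp
lift_definition one_gauss :: gauss is 1 by simp
lift_definition plus_gauss :: "gauss \<Rightarrow> gauss \<Rightarrow> gauss" is "(+)" by (simp add: gint_add)
lift_definition minus_gauss :: "gauss \<Rightarrow> gauss \<Rightarrow> gauss" is "(-)" by (simp add: gint_diff)
lift_definition uminus_gauss :: "gauss \<Rightarrow> gauss" is uminus by (simp add: gint_uminus)
lift_definition times_gauss :: "gauss \<Rightarrow> gauss \<Rightarrow> gauss" is "(*)" by (simp add: gint_mult)
instance
  by standard (transfer; simp add: algebra_simps)+
end

instance gauss :: idom
  by standard (transfer; simp)

lemma gc_eq_iff: "gc a = gc b \<longleftrightarrow> a = b" by (simp add: gc_inject)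
lemma gc_power: "gc (a ^ n) = gc a ^ n"
  by (induction n) (simp_all add: one_gauss.rep_eq times_gauss.rep_eq)

lift_definition ii :: gauss is \<i> by simp

definition gN :: "gauss \<Rightarrow> int" where
  "gN x = \<lfloor>Re (gc x)\<rfloor>^2 + \<lfloor>Im (gc x)\<rfloor>^2"

lemma of_int_gN: "real_of_int (gN x) = (cmod (gc x))^2"
proof -
  have g: "gint (gc x)" using gc by simp
  show ?thesis unfolding gN_def cmod_power2
    by (simp add: gint_Re_floor[OF g] gint_Im_floor[OF g])
qed

lemma gN_mult: "gN (a * b) = gN a * gN b"
proof -
  have "real_of_int (gN (a*b)) = real_of_int (gN a * gN b)"
    by (simp add: of_int_gN times_gauss.rep_eq norm_mult power_mult_distrib)
  then show ?thesis by linarith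
qed

lemma gN_nonneg: "gN x \<ge> 0" by (simp add: gN_def)

lemma gN_eq_0_iff: "gN x = 0 \<longleftrightarrow> x = 0"
proof -
  have "gN x = 0 \<longleftrightarrow> real_of_int (gN x) = 0" by linarith
  also have "\<dots> \<longleftrightarrow> gc x = 0" by (simp add: of_int_gN)
  also have "\<dots> \<longleftrightarrow> x = 0" by (metis gc_eq_iff zero_gauss.rep_eq)
  finally show ?thesis .
qed

lemma gN_0 [simp]: "gN 0 = 0" by (simp add: gN_eq_0_iff)

lemma gN_1 [simp]: "gN 1 = 1" by (simp add: gN_def one_gauss.rep_eq)

lemma sq_sum_eq_1: "(a::int)^2 + b^2 = 1 \<Longrightarrow> (a = 0 \<and> (b = 1 \<or> b = -1)) \<or> (b = 0 \<and> (a = 1 \<or> a = -1))"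
proof -
  assume h: "a^2 + b^2 = 1"
  have "a^2 \<le> 1" "b^2 \<le> 1" using h zero_le_power2[of a] zero_le_power2[of b] by linarith+
  then have "\<bar>a\<bar> \<le> 1" "\<bar>b\<bar> \<le> 1" by (auto simp: abs_square_le_1)
  then have "a \<in> {-1,0,1}" "b \<in> {-1,0,1}" by auto
  then show ?thesis using h by auto
qed


lemma dvd1_gauss_iff: "(x::gauss) dvd 1 \<longleftrightarrow> gc x \<in> {1, -1, \<i>, -\<i>}"
proof
  assume "x dvd 1"
  then obtain y where "1 = x * y" by (auto elim: dvdE)
  then have "gN x * gN y = 1" by (metis gN_1 gN_mult)
  then have "gN x = 1" using pos_zmult_eq_1_iff_lemma[of "gN x" "gN y"] gN_nonneg[of x] by linarith
  then have "\<lfloor>Re (gc x)\<rfloor>^2 + \<lfloor>Im (gc x)\<rfloor>^2 = 1" by (simp add: gN_def)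
  from sq_sum_eq_1[OF this] have "(\<lfloor>Re (gc x)\<rfloor> = 0 \<and> (\<lfloor>Im (gc x)\<rfloor> = 1 \<or> \<lfloor>Im (gc x)\<rfloor> = -1)) \<or> (\<lfloor>Im (gc x)\<rfloor> = 0 \<and> (\<lfloor>Re (gc x)\<rfloor> = 1 \<or> \<lfloor>Re (gc x)\<rfloor> = -1))" .
  moreover have g: "gint (gc x)" using gc by simp
  ultimately show "gc x \<in> {1, -1, \<i>, -\<i>}"
    using gint_Re_floor[OF g] gint_Im_floor[OF g]
    by (auto simp: complex_eq_iff)
next
  assume h: "gc x \<in> {1, -1, \<i>, -\<i>}"
  have "gint (cnj (gc x))" using gc gint_cnj by auto
  then have "x * gauss_of (cnj (gc x)) = 1"
    using h by (auto simp: gc_inject[symmetric] times_gauss.rep_eq one_gauss.rep_eq gauss_of_inverse)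
  then show "x dvd 1" by (metis dvdI)
qed

definition rnd :: "complex \<Rightarrow> complex" where
  "rnd z = Complex (of_int (round (Re z))) (of_int (round (Im z)))"

lemma gint_rnd: "gint (rnd z)" by (simp add: rnd_def gint_Complex_int)

lemma rnd_dist: "(cmod (z - rnd z))^2 \<le> 1/2"
proof -
  have a: "\<bar>Re z - of_int (round (Re z))\<bar> \<le> 1/2" "\<bar>Im z - of_int (round (Im z))\<bar> \<le> 1/2"
    using of_int_round_abs_le[of "Re z"] of_int_round_abs_le[of "Im z"] by linarith+
  have "\<bar>Re z - of_int (round (Re z))\<bar>^2 \<le> (1/2)^2" "\<bar>Im z - of_int (round (Im z))\<bar>^2 \<le> (1/2)^2"
    using a by (intro power_mono; simp)+
  moreover have "(1/2::real)^2 = 1/4" by (simp add: power_divide)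
  ultimately show ?thesis unfolding cmod_power2 rnd_def by simp
qed

definition ufc :: "complex \<Rightarrow> complex" where
  "ufc z = (if z = 0 then 0 else if Re z > 0 \<and> Im z \<ge> 0 then 1
            else if Re z \<le> 0 \<and> Im z > 0 then \<i> else if Re z < 0 \<and> Im z \<le> 0 then -1 else -\<i>)"

lemma gint_ufc: "gint (ufc z)" by (simp add: ufc_def gint_def)

lemma ufc_cases: "z \<noteq> 0 \<Longrightarrow> ufc z \<in> {1, -1, \<i>, -\<i>}" by (simp add: ufc_def)

lemma ufc_cnj: "z \<noteq> 0 \<Longrightarrow> ufc z * cnj (ufc z) = 1"
  by (auto simp: ufc_def complex_eq_iff)

lemma ufc_alt: "ufc (Complex a b) = (if a = 0 \<and> b = 0 then 0 else if a > 0 \<and> b \<ge> 0 then 1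
            else if a \<le> 0 \<and> b > 0 then \<i> else if a < 0 \<and> b \<le> 0 then -1 else -\<i>)"
  by (simp add: ufc_def complex_eq_iff)

lemma ufc_norm_region: "z \<noteq> 0 \<Longrightarrow> Re (z * cnj (ufc z)) > 0 \<and> Im (z * cnj (ufc z)) \<ge> 0"
proof (cases z)
  case (Complex a b)
  assume "z \<noteq> 0"
  then have "\<not> (a = 0 \<and> b = 0)" using Complex by (auto simp: complex_eq_iff)
  then show ?thesis unfolding Complex ufc_alt
    by (simp split: if_split) linarith
qed

lemma ufc_unit_left: "u \<in> {1, -1, \<i>, -\<i>} \<Longrightarrow> ufc (u * b) = u * ufc b"
proof (cases b)
  case (Complex x y)
  assume "u \<in> {1, -1, \<i>, -\<i>}"
  then consider "u = 1" | "u = -1" | "u = \<i>" | "u = -\<i>" by blast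
  then show ?thesis
  proof cases
    case 1 then show ?thesis by simp
  next
    case 2
    have e: "u * Complex x y = Complex (-x) (-y)" using 2 by (simp add: complex_eq_iff)
    show ?thesis apply (simp only: Complex e ufc_alt) using 2 by (simp split: if_split) linarith
  next
    case 3
    have e: "u * Complex x y = Complex (-y) x" using 3 by (simp add: complex_eq_iff)
    show ?thesis apply (simp only: Complex e ufc_alt) using 3 by (simp split: if_split) linarith
  next
    case 4
    have e: "u * Complex x y = Complex y (-x)" using 4 by (simp add: complex_eq_iff)
    show ?thesis apply (simp only: Complex e ufc_alt) using 4 by (simp split: if_split) linarith
  qed
qed

instantiation gauss :: "{normalization_semidom, idom_modulo}"
begin
lift_definition divide_gauss :: "gauss \<Rightarrow> gauss \<Rightarrow> gauss" is "\<lambda>a b. rnd (a / b)"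
  by (rule gint_rnd)
lift_definition modulo_gauss :: "gauss \<Rightarrow> gauss \<Rightarrow> gauss" is "\<lambda>a b. a - rnd (a / b) * b"
  by (intro gint_diff gint_mult gint_rnd)
lift_definition unit_factor_gauss :: "gauss \<Rightarrow> gauss" is ufc by (rule gint_ufc)
lift_definition normalize_gauss :: "gauss \<Rightarrow> gauss" is "\<lambda>z. z * cnj (ufc z)"
  by (intro gint_mult gint_cnj gint_ufc)
instance
proof
  fix a b :: gauss
  show "b \<noteq> 0 \<Longrightarrow> a * b div b = a"
    by transfer (simp add: rnd_def gint_round)
  show "a div 0 = 0" by transfer (simp add: rnd_def complex_eq_iff)
  show "a div b * b + a mod b = a" by transfer simp
  show "unit_factor 0 = (0::gauss)" by transfer (simp add: ufc_def)
  show "unit_factor a * normalize a = a"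
    by transfer (metis mult.commute mult.left_commute mult_1_right ufc_cnj mult_zero_left)
  show "normalize 0 = (0::gauss)" by transfer simp
  show "a dvd 1 \<Longrightarrow> unit_factor a = a"
    unfolding dvd1_gauss_iff by transfer (auto simp: ufc_def)
  show "a \<noteq> 0 \<Longrightarrow> unit_factor a dvd 1"
    unfolding dvd1_gauss_iff by transfer (rule ufc_cases)
  show "a dvd 1 \<Longrightarrow> unit_factor (a * b) = a * unit_factor b"
    unfolding dvd1_gauss_iff by transfer (rule ufc_unit_left)
qed
end

lemma gc_div: "gc (a div b) = rnd (gc a / gc b)" by (simp add: divide_gauss.rep_eq)
lemma gc_mod: "gc (a mod b) = gc a - rnd (gc a / gc b) * gc b" by (simp add: modulo_gauss.rep_eq)

instantiation gauss :: normalization_euclidean_semiring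
begin
definition euclidean_size_gauss :: "gauss \<Rightarrow> nat" where "euclidean_size_gauss x = nat (gN x)"
instance
proof
  fix a b :: gauss
  show "euclidean_size (0::gauss) = 0"
    by (simp add: euclidean_size_gauss_def gN_eq_0_iff)
  show "b \<noteq> 0 \<Longrightarrow> euclidean_size a \<le> euclidean_size (a * b)"
  proof -
    assume "b \<noteq> 0"
    then have "gN b \<ge> 1" using gN_nonneg[of b] gN_eq_0_iff[of b] by linarith
    then have "gN a \<le> gN a * gN b" using gN_nonneg[of a] by (simp add: mult_le_cancel_left1)
    then show ?thesis by (simp add: euclidean_size_gauss_def gN_mult)
  qed
  show "b \<noteq> 0 \<Longrightarrow> euclidean_size (a mod b) < euclidean_size b"
  proof -
    assume b: "b \<noteq> 0"
    then have gb: "gc b \<noteq> 0" by (metis gc_eq_iff zero_gauss.rep_eq)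
    define w where "w = gc a / gc b"
    have "gc (a mod b) = (w - rnd w) * gc b" using gb by (simp add: gc_mod w_def algebra_simps)
    then have "real_of_int (gN (a mod b)) = (cmod (w - rnd w))^2 * (cmod (gc b))^2"
      by (simp add: of_int_gN norm_mult power_mult_distrib)
    also have "\<dots> \<le> 1/2 * (cmod (gc b))^2"
      by (rule mult_right_mono[OF rnd_dist]) simp
    also have "\<dots> < (cmod (gc b))^2" using gb by simp
    finally have "real_of_int (gN (a mod b)) < real_of_int (gN b)" by (simp add: of_int_gN)
    then have "gN (a mod b) < gN b" by linarith
    then show ?thesis using gN_nonneg[of "a mod b"] by (simp add: euclidean_size_gauss_def)
  qed
qed
end

lemma gc_mult: "gc (a * b) = gc a * gc b" by (simp add: times_gauss.rep_eq)
lemma gc_1 [simp]: "gc 1 = 1" by (simp add: one_gauss.rep_eq)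
lemma gc_0 [simp]: "gc 0 = 0" by (simp add: zero_gauss.rep_eq)
lemma gint_gc [simp]: "gint (gc a)" using gc by simp
lemma gint_ex: "gint z \<Longrightarrow> \<exists>Z. z = gc Z" by (metis gauss_of_inverse mem_Collect_eq)
lemma gc_eq_0_iff [simp]: "gc a = 0 \<longleftrightarrow> a = 0" by (metis gc_0 gc_eq_iff)

lemma gc_Complex: "gc a = Complex (of_int \<lfloor>Re (gc a)\<rfloor>) (of_int \<lfloor>Im (gc a)\<rfloor>)"
  by (simp add: complex_eq_iff gint_Re_floor gint_Im_floor)

lemma gN_power: "gN (a ^ n) = gN a ^ n"
  by (induction n) (simp_all add: gN_mult)

lemma gN_prod: "gN (prod f A) = (\<Prod>x\<in>A. gN (f x))"
  by (induction A rule: infinite_finite_induct) (simp_all add: gN_mult)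

lemma cnj_gc_mult: "gc a * cnj (gc a) = of_int (gN a)"
proof -
  have "gc a * cnj (gc a) = complex_of_real ((cmod (gc a))^2)" by (metis complex_norm_square of_real_power)
  also have "\<dots> = of_int (gN a)" by (simp add: of_int_gN[symmetric])
  finally show ?thesis .
qed

lemma is_unit_gN: "is_unit a \<longleftrightarrow> gN a = 1"
proof
  assume "is_unit a"
  then obtain y where "1 = a * y" by (auto elim: dvdE)
  then have "gN a * gN y = 1" by (metis gN_1 gN_mult)
  then show "gN a = 1" using pos_zmult_eq_1_iff_lemma[of "gN a" "gN y"] gN_nonneg[of a] by linarith
next
  assume h: "gN a = 1"
  have "gint (cnj (gc a))" by (simp add: gint_cnj)
  then have "gc (a * gauss_of (cnj (gc a))) = gc 1"
    using h by (simp add: gc_mult gauss_of_inverse cnj_gc_mult)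
  then have "a * gauss_of (cnj (gc a)) = 1" by (metis gc_eq_iff)
  then show "is_unit a" by (metis dvdI)
qed

lemma gN_normalize [simp]: "gN (normalize a) = gN a"
proof -
  have "gN a = gN (unit_factor a) * gN (normalize a)"
    by (metis gN_mult unit_factor_mult_normalize)
  moreover have "a \<noteq> 0 \<Longrightarrow> gN (unit_factor a) = 1"
    by (simp add: is_unit_gN[symmetric])
  ultimately show ?thesis by (cases "a = 0") auto
qed

lemma int_mult_eq_2: "(x::int) \<ge> 0 \<Longrightarrow> y \<ge> 0 \<Longrightarrow> x * y = 2 \<Longrightarrow> x = 1 \<or> y = 1"
proof -
  assume a: "x \<ge> 0" "y \<ge> 0" "x * y = 2"
  then have "x dvd 2" by (metis dvd_triv_left)
  then have "x \<le> 2" by (simp add: zdvd_imp_le)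
  then have "x = 0 \<or> x = 1 \<or> x = 2" using a by auto
  then show ?thesis using a by auto
qed

definition pi1 :: gauss where "pi1 = gauss_of (1 + \<i>)"

lemma gc_pi1: "gc pi1 = 1 + \<i>"
  unfolding pi1_def by (rule gauss_of_inverse) (simp add: gint_add)

lemma gN_pi1: "gN pi1 = 2"
  by (simp add: gN_def gc_pi1)

lemma prime_pi1: "prime pi1"
proof -
  have "irreducible pi1"
  proof (rule irreducibleI)
    show "pi1 \<noteq> 0" using gN_pi1 by (metis gN_0 zero_neq_numeral)
    show "\<not> is_unit pi1" using gN_pi1 by (simp add: is_unit_gN)
    fix a b assume "pi1 = a * b"
    then have "gN a * gN b = 2" using gN_pi1 by (metis gN_mult)
    then show "is_unit a \<or> is_unit b"
      using int_mult_eq_2 gN_nonneg by (simp add: is_unit_gN)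
  qed
  then have "prime_elem pi1" by (simp add: prime_elem_iff_irreducible)
  moreover have "normalize pi1 = pi1"
    by (simp add: gc_eq_iff[symmetric] normalize_gauss.rep_eq gc_pi1 ufc_def)
  ultimately show ?thesis by (simp add: prime_def)
qed

lemma even_sq_sum_iff: "even ((a::int)^2 + b^2) \<longleftrightarrow> even (a + b)"
  by auto

lemma pi1_dvd_iff: "pi1 dvd a \<longleftrightarrow> even (gN a)"
proof
  assume "pi1 dvd a"
  then obtain c where "a = pi1 * c" by (auto elim: dvdE)
  then show "even (gN a)" by (simp add: gN_mult gN_pi1)
next
  assume "even (gN a)"
  define x where "x = \<lfloor>Re (gc a)\<rfloor>"
  define y where "y = \<lfloor>Im (gc a)\<rfloor>"
  have "even (x + y)" using \<open>even (gN a)\<close> by (simp add: gN_def x_def y_def)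
  then obtain k where k: "x + y = 2 * k" by (rule evenE)
  define c where "c = Complex (of_int k) (of_int (y - k))"
  have gcc: "gint c" unfolding c_def by (rule gint_Complex_int)
  have "gc a = Complex (of_int x) (of_int y)" unfolding x_def y_def by (rule gc_Complex)
  also have "\<dots> = (1 + \<i>) * c" using k
    by (simp add: c_def complex_eq_iff)
  finally have "gc a = gc (pi1 * gauss_of c)"
    by (simp add: gc_mult gc_pi1 gauss_of_inverse gcc)
  then show "pi1 dvd a" by (simp add: gc_eq_iff)
qed

lemma sq_mod4_odd: "odd (a::int) \<Longrightarrow> a^2 mod 4 = 1"
proof -
  assume "odd a"
  then obtain k where "a = 2 * k + 1" by (auto elim: oddE)
  then have "a^2 = 4 * (k^2 + k) + 1" by (simp add: power2_eq_square algebra_simps)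
  moreover have "(4 * m + 1) mod 4 = (1::int)" for m by presburger
  ultimately show ?thesis by metis
qed

lemma sq_mod4_even: "even (a::int) \<Longrightarrow> a^2 mod 4 = 0"
proof -
  assume "even a"
  then obtain k where "a = 2 * k" by (auto elim: evenE)
  then have "a^2 = 4 * k^2" by (simp add: power2_eq_square algebra_simps)
  then show ?thesis by simp
qed

lemma odd_sq_sum_mod4: "odd ((a::int)^2 + b^2) \<Longrightarrow> (a^2 + b^2) mod 4 = 1"
proof -
  assume h: "odd (a^2 + b^2)"
  then have "(odd a \<and> even b) \<or> (even a \<and> odd b)" by auto
  moreover have e: "(a^2+b^2) mod 4 = (a^2 mod 4 + b^2 mod 4) mod 4" by (simp add: mod_add_eq)
  ultimately show ?thesis
    using sq_mod4_odd[of a] sq_mod4_even[of a] sq_mod4_odd[of b] sq_mod4_even[of b]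
    by (elim disjE conjE) simp_all
qed

lemma odd_gN_mod4: "odd (gN a) \<Longrightarrow> gN a mod 4 = 1"
  unfolding gN_def by (rule odd_sq_sum_mod4)

lemma gdvd_gc: "gdvd (gc a) (gc b) \<longleftrightarrow> a dvd b"
proof
  assume "gdvd (gc a) (gc b)"
  then obtain y where y: "gint y" "gc b = gc a * y" by (auto simp: gdvd_def)
  then obtain Y where "y = gc Y" using gint_ex by blast
  then have "gc b = gc (a * Y)" using y by (simp add: gc_mult)
  then show "a dvd b" by (simp add: gc_eq_iff)
next
  assume "a dvd b"
  then obtain k where "b = a * k" by (auto elim: dvdE)
  then show "gdvd (gc a) (gc b)" unfolding gdvd_def by (intro exI[of _ "gc k"]) (simp add: gc_mult)
qed

lemma gdvd_gc_ex: "gdvd (gc a) q \<Longrightarrow> \<exists>Q. q = gc Q"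
  unfolding gdvd_def using gint_ex gint_mult gint_gc by blast

lemma gunit_gc: "gunit (gc a) \<longleftrightarrow> is_unit a"
  unfolding gunit_def by (metis gc_1 gdvd_gc gint_gc)

lemma all_gint: "(\<forall>x. gint x \<longrightarrow> P x) \<longleftrightarrow> (\<forall>X. P (gc X))"
  using gint_ex gint_gc by blast

lemma gprime_gc: "gprime (gc p) \<longleftrightarrow> prime_elem p"
proof -
  have "(\<forall>a b. gint a \<and> gint b \<and> gdvd (gc p) (a * b) \<longrightarrow> gdvd (gc p) a \<or> gdvd (gc p) b)
      \<longleftrightarrow> (\<forall>A B. p dvd A * B \<longrightarrow> p dvd A \<or> p dvd B)"
  proof -
    have "(\<forall>a b. gint a \<and> gint b \<and> gdvd (gc p) (a * b) \<longrightarrow> gdvd (gc p) a \<or> gdvd (gc p) b)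
      \<longleftrightarrow> (\<forall>A B. gdvd (gc p) (gc A * gc B) \<longrightarrow> gdvd (gc p) (gc A) \<or> gdvd (gc p) (gc B))"
      using gint_ex gint_gc by blast
    also have "\<dots> \<longleftrightarrow> (\<forall>A B. p dvd A * B \<longrightarrow> p dvd A \<or> p dvd B)"
      by (simp add: gc_mult[symmetric] gdvd_gc)
    finally show ?thesis .
  qed
  then show ?thesis unfolding gprime_def prime_elem_def by (simp add: gunit_gc)
qed

lemma grelprime_gc: "grelprime (gc a) (gc b) \<longleftrightarrow> coprime a b"
proof -
  have "grelprime (gc a) (gc b) \<longleftrightarrow> (\<forall>D. gdvd (gc D) (gc a) \<and> gdvd (gc D) (gc b) \<longrightarrow> gunit (gc D))"
    unfolding grelprime_def using gint_ex gint_gc by blast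
  also have "\<dots> \<longleftrightarrow> coprime a b" by (auto simp: gdvd_gc gunit_gc coprime_def)
  finally show ?thesis .
qed

lemma gassoc_set: "{q. gassoc (gc a) q} = gc ` {Q. normalize Q = normalize a}"
proof (intro set_eqI iffI)
  fix q assume "q \<in> {q. gassoc (gc a) q}"
  then have h: "gdvd (gc a) q" "gdvd q (gc a)" by (auto simp: gassoc_def)
  then obtain Q where Q: "q = gc Q" using gdvd_gc_ex by blast
  then have "a dvd Q" "Q dvd a" using h by (auto simp: gdvd_gc)
  then have "normalize Q = normalize a" by (intro associatedI)
  then show "q \<in> gc ` {Q. normalize Q = normalize a}" using Q by auto
next
  fix q assume "q \<in> gc ` {Q. normalize Q = normalize a}"
  then obtain Q where "q = gc Q" "normalize Q = normalize a" by auto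
  then show "q \<in> {q. gassoc (gc a) q}"
    by (auto simp: gassoc_def gdvd_gc dest: associatedD1 associatedD2)
qed

lemma arg_region: "z \<noteq> 0 \<Longrightarrow> (0 \<le> Arg z \<and> Arg z < pi / 2) \<longleftrightarrow> (Re z > 0 \<and> Im z \<ge> 0)"
proof -
  assume z: "z \<noteq> 0"
  have eq: "z = of_real (norm z) * exp (\<i> * of_real (Arg z))" using Arg_eq[OF z] by simp
  have re: "Re z = norm z * cos (Arg z)"
    by (subst eq) (simp add: Re_exp Im_exp)
  have nz: "norm z > 0" using z by simp
  show ?thesis
  proof
    assume a: "0 \<le> Arg z \<and> Arg z < pi / 2"
    then have "cos (Arg z) > 0" by (intro cos_gt_zero_pi) auto
    then show "Re z > 0 \<and> Im z \<ge> 0" using a re nz Arg_less_0 by auto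
  next
    assume b: "Re z > 0 \<and> Im z \<ge> 0"
    then have "0 \<le> Arg z" using Arg_less_0 by auto
    moreover have "Arg z < pi / 2"
    proof (rule ccontr)
      assume "\<not> Arg z < pi / 2"
      then have "0 \<le> pi - Arg z" "pi - Arg z \<le> pi / 2" using Arg_le_pi[of z] by auto
      then have "cos (pi - Arg z) \<ge> 0" by (intro cos_ge_zero) auto
      then have "cos (Arg z) \<le> 0" by simp
      then have "Re z \<le> 0" using re nz by (simp add: mult_nonneg_nonpos)
      then show False using b by simp
    qed
    ultimately show "0 \<le> Arg z \<and> Arg z < pi / 2" by simp
  qed
qed

lemma ufc_eq_1: "z \<noteq> 0 \<Longrightarrow> ufc z = 1 \<longleftrightarrow> (Re z > 0 \<and> Im z \<ge> 0)"
  unfolding ufc_def by (simp add: complex_eq_iff)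

lemma normalize_eq_self_iff: "a \<noteq> 0 \<Longrightarrow> normalize a = a \<longleftrightarrow> (Re (gc a) > 0 \<and> Im (gc a) \<ge> 0)"
proof -
  assume a: "a \<noteq> 0"
  then have nz: "gc a \<noteq> 0" by simp
  have "normalize a = a \<longleftrightarrow> gc (normalize a) = gc a"
    by (rule gc_eq_iff[symmetric])
  also have "\<dots> \<longleftrightarrow> gc a * cnj (ufc (gc a)) = gc a * 1"
    by (simp only: normalize_gauss.rep_eq mult_1_right)
  also have "\<dots> \<longleftrightarrow> cnj (ufc (gc a)) = 1" using nz by (rule mult_left_cancel)
  also have "\<dots> \<longleftrightarrow> ufc (gc a) = 1" by (metis complex_cnj_one complex_cnj_cnj)
  also have "\<dots> \<longleftrightarrow> (Re (gc a) > 0 \<and> Im (gc a) \<ge> 0)"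
    using nz by (rule ufc_eq_1)
  finally show ?thesis .
qed

lemma gA_gc: "gc a \<in> gA \<longleftrightarrow> a \<noteq> 0 \<and> normalize a = a"
  unfolding gA_def using arg_region[of "gc a"] normalize_eq_self_iff[of a] by auto

lemma div_gc: "b dvd a \<Longrightarrow> b \<noteq> 0 \<Longrightarrow> gc a / gc b = gc (a div b)"
proof -
  assume "b dvd a" "b \<noteq> 0"
  then have "gc a = gc b * gc (a div b)" by (metis dvd_mult_div_cancel gc_mult)
  then show ?thesis using \<open>b \<noteq> 0\<close> by simp
qed

definition UD :: "gauss \<Rightarrow> gauss set" where
  "UD Z = {d. d \<noteq> 0 \<and> normalize d = d \<and> d dvd Z \<and> coprime d (Z div d)}"

lemma udiv_set: "Z \<noteq> 0 \<Longrightarrow> {x. udiv x (gc Z)} = gc ` UD Z"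
proof (intro set_eqI iffI)
  fix x assume Z: "Z \<noteq> 0" and "x \<in> {x. udiv x (gc Z)}"
  then have u: "x \<in> gA" "gdvd x (gc Z)" "grelprime x (gc Z / x)" by (auto simp: udiv_def)
  then obtain X where X: "x = gc X" using gint_ex by (auto simp: gA_def)
  then have "X \<noteq> 0" "normalize X = X" "X dvd Z" using u by (auto simp: gA_gc gdvd_gc)
  moreover have "coprime X (Z div X)" using u X \<open>X dvd Z\<close> \<open>X \<noteq> 0\<close> by (simp add: div_gc grelprime_gc)
  ultimately show "x \<in> gc ` UD Z" using X by (auto simp: UD_def)
next
  fix x assume Z: "Z \<noteq> 0" and "x \<in> gc ` UD Z"
  then obtain X where X: "x = gc X" "X \<noteq> 0" "normalize X = X" "X dvd Z" "coprime X (Z div X)"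
    by (auto simp: UD_def)
  then show "x \<in> {x. udiv x (gc Z)}"
    by (simp add: udiv_def gA_gc gdvd_gc div_gc grelprime_gc)
qed

definition DS :: "gauss \<Rightarrow> gauss set \<Rightarrow> gauss" where
  "DS Z S = normalize (\<Prod>p\<in>S. p ^ multiplicity p Z)"

lemma DS_nonzero: "finite S \<Longrightarrow> S \<subseteq> prime_factors Z \<Longrightarrow> DS Z S \<noteq> 0"
  unfolding DS_def by (auto simp: prod_zero_iff dest: in_prime_factors_imp_prime)

lemma mult_DS:
  assumes "finite S" "S \<subseteq> prime_factors Z" "prime q"
  shows "multiplicity q (DS Z S) = (if q \<in> S then multiplicity q Z else 0)"
  unfolding DS_def multiplicity_normalize_right
  using assms by (intro multiplicity_prod_prime_powers) auto

lemma mult_pos_P: "p \<in> prime_factors Z \<Longrightarrow> multiplicity p Z > 0"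
  by (simp add: prime_factors_multiplicity)

lemma DS_in_UD:
  assumes Z: "Z \<noteq> 0" and S: "S \<subseteq> prime_factors Z"
  shows "DS Z S \<in> UD Z"
proof -
  have fin: "finite S" using S finite_subset by (metis finite_set_mset)
  have nz: "DS Z S \<noteq> 0" using DS_nonzero[OF fin S] .
  have dvd: "DS Z S dvd Z"
  proof (rule multiplicity_le_imp_dvd[OF nz])
    fix q :: gauss assume "prime q"
    then show "multiplicity q (DS Z S) \<le> multiplicity q Z"
      using mult_DS[OF fin S] by simp
  qed
  define W where "W = Z div DS Z S"
  have ZW: "Z = DS Z S * W" using dvd by (simp add: W_def)
  have W: "W \<noteq> 0" using ZW Z by auto
  have cop: "coprime (DS Z S) W"
  proof (rule ccontr)
    assume "\<not> coprime (DS Z S) W"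
    then obtain c where c: "c dvd DS Z S" "c dvd W" "\<not> is_unit c" by (rule not_coprimeE)
    have "c \<noteq> 0" using c(2) W by auto
    then obtain q where q: "q dvd c" "prime q" using prime_divisor_exists c(3) by blast
    have qD: "q dvd DS Z S" "q dvd W" using q c dvd_trans by blast+
    have "multiplicity q (DS Z S) > 0" using qD(1) nz q(2)
      by (simp add: prime_multiplicity_gt_zero_iff)
    then have qS: "q \<in> S" and eq: "multiplicity q (DS Z S) = multiplicity q Z"
      using mult_DS[OF fin S q(2)] by (auto split: if_splits)
    have "multiplicity q W > 0" using qD(2) W q(2) by (simp add: prime_multiplicity_gt_zero_iff)
    moreover have "multiplicity q Z = multiplicity q (DS Z S * W)" by (rule arg_cong[OF ZW])
    moreover have "multiplicity q (DS Z S * W) = multiplicity q (DS Z S) + multiplicity q W"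
      using nz W q(2) by (intro prime_elem_multiplicity_mult_distrib) auto
    ultimately show False using eq by linarith
  qed
  show ?thesis unfolding UD_def using nz dvd cop by (simp add: W_def DS_def)
qed

lemma UD_in_DS:
  assumes Z: "Z \<noteq> 0" and d: "d \<in> UD Z"
  shows "prime_factors d \<subseteq> prime_factors Z \<and> d = DS Z (prime_factors d)"
proof -
  from d have nz: "d \<noteq> 0" and nd: "normalize d = d" and dvd: "d dvd Z" and cop: "coprime d (Z div d)"
    by (auto simp: UD_def)
  have sub: "prime_factors d \<subseteq> prime_factors Z" using Z dvd by (rule dvd_prime_factors)
  define W where "W = Z div d"
  have ZW: "Z = d * W" using dvd by (simp add: W_def)
  have W: "W \<noteq> 0" using ZW Z by auto
  have fin: "finite (prime_factors d)" by simp
  have "normalize d = normalize (DS Z (prime_factors d))"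
  proof (rule multiplicity_eq_imp_eq[OF nz DS_nonzero[OF fin sub]])
    fix q :: gauss assume q: "prime q"
    show "multiplicity q d = multiplicity q (DS Z (prime_factors d))"
    proof (cases "q \<in> prime_factors d")
      case True
      then have "q dvd d" by auto
      have "\<not> q dvd W"
      proof
        assume "q dvd W"
        then have "is_unit q" using cop \<open>q dvd d\<close> by (auto simp: W_def coprime_def)
        then show False using q by (simp add: prime_def prime_elem_def)
      qed
      then have "multiplicity q W = 0" by (rule not_dvd_imp_multiplicity_0)
      have "multiplicity q Z = multiplicity q (d * W)" by (rule arg_cong[OF ZW])
      also have "\<dots> = multiplicity q d + multiplicity q W"
        using nz W q by (intro prime_elem_multiplicity_mult_distrib) auto
      finally have "multiplicity q Z = multiplicity q d" using \<open>multiplicity q W = 0\<close> by simp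
      then show ?thesis using mult_DS[OF fin sub q] True by simp
    next
      case False
      then have "\<not> q dvd d" using nz q by (auto simp: in_prime_factors_iff)
      then have "multiplicity q d = 0" by (rule not_dvd_imp_multiplicity_0)
      then show ?thesis using mult_DS[OF fin sub q] False by simp
    qed
  qed
  then have "d = DS Z (prime_factors d)" using nd by (simp add: DS_def)
  then show ?thesis using sub by simp
qed

lemma UD_eq: "Z \<noteq> 0 \<Longrightarrow> UD Z = DS Z ` Pow (prime_factors Z)"
proof (intro set_eqI iffI)
  fix d assume "Z \<noteq> 0" "d \<in> UD Z"
  then show "d \<in> DS Z ` Pow (prime_factors Z)" using UD_in_DS by blast
next
  fix d assume "Z \<noteq> 0" "d \<in> DS Z ` Pow (prime_factors Z)"
  then show "d \<in> UD Z" using DS_in_UD by blast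
qed

lemma inj_DS: "inj_on (DS Z) (Pow (prime_factors Z))"
proof (rule inj_onI)
  fix S T assume S: "S \<in> Pow (prime_factors Z)" and T: "T \<in> Pow (prime_factors Z)"
    and eq: "DS Z S = DS Z T"
  have fS: "finite S" and fT: "finite T" using S T by (auto intro: finite_subset)
  have sS: "S \<subseteq> prime_factors Z" and sT: "T \<subseteq> prime_factors Z" using S T by auto
  have "q \<in> T" if "q \<in> S" for q
  proof -
    have q: "prime q" "q \<in> prime_factors Z" using that S by auto
    have "multiplicity q (DS Z S) > 0" using mult_DS[OF fS sS q(1)] that mult_pos_P[OF q(2)] by auto
    then show ?thesis using eq mult_DS[OF fT sT q(1)] by (auto split: if_splits)
  qed
  moreover have "q \<in> S" if "q \<in> T" for q
  proof -
    have q: "prime q" "q \<in> prime_factors Z" using that T by auto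
    have "multiplicity q (DS Z T) > 0" using mult_DS[OF fT sT q(1)] that mult_pos_P[OF q(2)] by auto
    then show ?thesis using eq mult_DS[OF fS sS q(1)] by (auto split: if_splits)
  qed
  ultimately show "S = T" by blast
qed

lemma sum_UD:
  assumes Z: "Z \<noteq> 0"
  shows "(\<Sum>d\<in>UD Z. gN d) = (\<Prod>p\<in>prime_factors Z. gN p ^ multiplicity p Z + 1)"
proof -
  have "(\<Sum>d\<in>UD Z. gN d) = (\<Sum>S\<in>Pow (prime_factors Z). gN (DS Z S))"
    using UD_eq[OF Z] inj_DS by (simp add: sum.reindex)
  also have "\<dots> = (\<Sum>S\<in>Pow (prime_factors Z). (\<Prod>p\<in>S. gN p ^ multiplicity p Z) * (\<Prod>p\<in>prime_factors Z - S. 1))"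
    by (simp add: DS_def gN_prod gN_power)
  also have "\<dots> = (\<Prod>p\<in>prime_factors Z. gN p ^ multiplicity p Z + 1)"
    by (rule prod_add[symmetric]) simp
  finally show ?thesis .
qed

lemma gN_prod_factors:
  assumes Z: "Z \<noteq> 0"
  shows "gN Z = (\<Prod>p\<in>prime_factors Z. gN p ^ multiplicity p Z)"
proof -
  have fin: "finite (prime_factors Z)" by simp
  have "normalize Z = normalize (DS Z (prime_factors Z))"
  proof (rule multiplicity_eq_imp_eq[OF Z DS_nonzero[OF fin order_refl]])
    fix q :: gauss assume q: "prime q"
    show "multiplicity q Z = multiplicity q (DS Z (prime_factors Z))"
      using mult_DS[OF fin order_refl q] q by (auto simp: prime_factors_multiplicity)
  qed
  then have "gN Z = gN (DS Z (prime_factors Z))" by (metis gN_normalize)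
  then show ?thesis by (simp add: DS_def gN_prod gN_power)
qed

lemma pow_mod4: "(q::int) mod 4 = 1 \<Longrightarrow> q ^ e mod 4 = 1"
proof -
  assume "q mod 4 = 1"
  moreover have "q ^ e mod 4 = (q mod 4) ^ e mod 4" by (simp add: power_mod)
  ultimately show ?thesis by simp
qed

lemma half_odd: "(q::int) mod 4 = 1 \<Longrightarrow> q + 1 = 2 * ((q + 1) div 2) \<and> odd ((q + 1) div 2)"
  by presburger

lemma v2a: "odd (M::int) \<Longrightarrow> multiplicity (2::int) (2 ^ k * M) = k"
proof -
  assume M: "odd M"
  have p: "prime_elem (2::int)" by simp
  have "M \<noteq> 0" using M by auto
  then have "multiplicity (2::int) (2 ^ k * M) = multiplicity 2 ((2::int) ^ k) + multiplicity 2 M"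
    using p by (intro prime_elem_multiplicity_mult_distrib) auto
  also have "multiplicity 2 M = 0" using M by (intro not_dvd_imp_multiplicity_0) simp
  finally show ?thesis using p by simp
qed

lemma v2b: "(t::int) \<noteq> 0 \<Longrightarrow> odd Q \<Longrightarrow> multiplicity (2::int) (t * (2 ^ g * Q)) = multiplicity 2 t + g"
proof -
  assume t: "t \<noteq> 0" and Q: "odd Q"
  have p: "prime_elem (2::int)" by simp
  have "Q \<noteq> 0" using Q by auto
  then have "multiplicity (2::int) (t * (2 ^ g * Q)) = multiplicity 2 t + multiplicity 2 ((2::int) ^ g * Q)"
    using p t by (intro prime_elem_multiplicity_mult_distrib) auto
  also have "multiplicity 2 ((2::int) ^ g * Q) = g" using Q by (rule v2a)
  finally show ?thesis .
qed

lemma count_lemma: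
  fixes Z :: gauss and t :: int
  assumes Z: "Z \<noteq> 0" and t: "t \<noteq> 0"
    and eq: "(\<Prod>p\<in>prime_factors Z. gN p ^ multiplicity p Z + 1) = t * (\<Prod>p\<in>prime_factors Z. gN p ^ multiplicity p Z)"
  shows "card (prime_factors Z - {pi1}) = multiplicity pi1 Z + multiplicity 2 t"
proof -
  define P where "P = prime_factors Z"
  define P' where "P' = P - {pi1}"
  define e where "e = (\<lambda>p. multiplicity p Z)"
  define m where "m = (\<lambda>p. (gN p ^ e p + 1) div 2)"
  have finP: "finite P" and finP': "finite P'" by (simp_all add: P_def P'_def)
  have oddN: "odd (gN p)" if "p \<in> P'" for p
  proof
    assume "even (gN p)"
    then have "pi1 dvd p" by (simp add: pi1_dvd_iff)
    moreover have "prime p" using that by (auto simp: P'_def P_def)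
    ultimately have "pi1 = p" using prime_pi1 by (intro primes_dvd_imp_eq)
    then show False using that by (simp add: P'_def)
  qed
  have hm: "gN p ^ e p + 1 = 2 * m p \<and> odd (m p)" if "p \<in> P'" for p
  proof -
    have "gN p mod 4 = 1" using oddN[OF that] by (rule odd_gN_mod4)
    then have "gN p ^ e p mod 4 = 1" by (rule pow_mod4)
    then show ?thesis unfolding m_def by (rule half_odd)
  qed
  have A: "(\<Prod>p\<in>P'. gN p ^ e p + 1) = 2 ^ card P' * (\<Prod>p\<in>P'. m p)"
  proof -
    have "(\<Prod>p\<in>P'. gN p ^ e p + 1) = (\<Prod>p\<in>P'. 2 * m p)" using hm by (intro prod.cong) auto
    also have "\<dots> = 2 ^ card P' * (\<Prod>p\<in>P'. m p)" by (simp add: prod.distrib)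
    finally show ?thesis .
  qed
  have oddM: "odd (\<Prod>p\<in>P'. m p)" using hm finP' by (auto simp: even_prod_iff)
  have oddO: "odd (\<Prod>p\<in>P'. gN p ^ e p)" using oddN finP' by (auto simp: even_prod_iff)
  show ?thesis
  proof (cases "pi1 \<in> P")
    case True
    define g where "g = e pi1"
    have PP: "P = insert pi1 P'" using True by (auto simp: P'_def)
    have nin: "pi1 \<notin> P'" by (simp add: P'_def)
    have "(2 ^ g + 1) * (2 ^ card P' * (\<Prod>p\<in>P'. m p)) = t * (2 ^ g * (\<Prod>p\<in>P'. gN p ^ e p))"
      using eq unfolding P_def[symmetric] e_def[symmetric] PP
      by (simp add: prod.insert[OF finP' nin] A[symmetric] gN_pi1 g_def e_def)
    then have "2 ^ card P' * ((2 ^ g + 1) * (\<Prod>p\<in>P'. m p)) = t * (2 ^ g * (\<Prod>p\<in>P'. gN p ^ e p))"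
      by (simp add: algebra_simps)
    then have "multiplicity (2::int) (2 ^ card P' * ((2 ^ g + 1) * (\<Prod>p\<in>P'. m p))) =
               multiplicity 2 (t * (2 ^ g * (\<Prod>p\<in>P'. gN p ^ e p)))" by simp
    moreover have "g > 0" using True by (simp add: g_def e_def P_def mult_pos_P)
    ultimately have "card P' = multiplicity 2 t + g"
      using oddM oddO t by (simp add: v2a v2b)
    then show ?thesis by (simp add: P'_def P_def g_def e_def)
  next
    case False
    have g: "multiplicity pi1 Z = 0" using False prime_pi1 by (auto simp: P_def prime_factors_multiplicity)
    have PP: "P' = P" using False by (auto simp: P'_def)
    have "2 ^ card P' * (\<Prod>p\<in>P'. m p) = t * (2 ^ 0 * (\<Prod>p\<in>P'. gN p ^ e p))"
      using eq unfolding P_def[symmetric] e_def[symmetric] PP[symmetric] by (simp add: A[symmetric] e_def)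
    then have "multiplicity (2::int) (2 ^ card P' * (\<Prod>p\<in>P'. m p)) =
               multiplicity 2 (t * (2 ^ 0 * (\<Prod>p\<in>P'. gN p ^ e p)))" by simp
    moreover have "multiplicity (2::int) (2 ^ card P' * (\<Prod>p\<in>P'. m p)) = card P'"
      using oddM by (rule v2a)
    moreover have "multiplicity (2::int) (t * (2 ^ 0 * (\<Prod>p\<in>P'. gN p ^ e p))) = multiplicity 2 t + 0"
      using t oddO by (rule v2b)
    ultimately have "card P' = multiplicity 2 t + 0" by simp
    then show ?thesis by (simp add: P'_def P_def g)
  qed
qed

lemma powi2: "(r::real) powi 2 = r ^ 2"
  by (simp add: power_int_def)

lemma delta_eq:
  assumes Z: "Z \<noteq> 0"
  shows "delta_star 2 (gc Z) = real_of_int (\<Sum>d\<in>UD Z. gN d)"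
proof -
  have "delta_star 2 (gc Z) = (\<Sum>x\<in>gc ` UD Z. cmod x powi 2)"
    unfolding delta_star_def udiv_set[OF Z] ..
  also have "\<dots> = (\<Sum>d\<in>UD Z. cmod (gc d) powi 2)"
    by (rule sum.reindex[unfolded comp_def]) (simp add: inj_on_def gc_eq_iff)
  also have "\<dots> = (\<Sum>d\<in>UD Z. real_of_int (gN d))"
    by (simp add: powi2 of_int_gN)
  finally show ?thesis by simp
qed

lemma card_classes:
  fixes X :: gauss
  assumes X: "X \<noteq> 0"
  shows "card ((\<lambda>p. {q. gassoc p q}) ` {p. gprime p \<and> gdvd p (gc X)}) = card (prime_factors X)"
proof -
  define h where "h = (\<lambda>N. gc ` {Q. normalize Q = N})"
  have s1: "{p. gprime p \<and> gdvd p (gc X)} = gc ` {P. prime_elem P \<and> P dvd X}"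
  proof (intro set_eqI iffI)
    fix p assume "p \<in> {p. gprime p \<and> gdvd p (gc X)}"
    then have h1: "gprime p" "gdvd p (gc X)" by auto
    have "gint p" using h1(1) by (simp add: gprime_def)
    then obtain P where "p = gc P" using gint_ex by blast
    then show "p \<in> gc ` {P. prime_elem P \<and> P dvd X}" using h1 by (auto simp: gprime_gc gdvd_gc)
  next
    fix p assume "p \<in> gc ` {P. prime_elem P \<and> P dvd X}"
    then show "p \<in> {p. gprime p \<and> gdvd p (gc X)}" by (auto simp: gprime_gc gdvd_gc)
  qed
  have s2: "normalize ` {P. prime_elem P \<and> P dvd X} = {p. prime p \<and> p dvd X}"
  proof (intro set_eqI iffI)
    fix p assume "p \<in> normalize ` {P. prime_elem P \<and> P dvd X}"
    then show "p \<in> {p. prime p \<and> p dvd X}" by auto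
  next
    fix p assume "p \<in> {p. prime p \<and> p dvd X}"
    then have "prime_elem p" "p dvd X" "normalize p = p" by (auto simp: prime_def)
    then show "p \<in> normalize ` {P. prime_elem P \<and> P dvd X}" by (metis (mono_tags, lifting) image_eqI mem_Collect_eq)
  qed
  have "(\<lambda>p. {q. gassoc p q}) ` {p. gprime p \<and> gdvd p (gc X)}
        = (\<lambda>P. {q. gassoc (gc P) q}) ` {P. prime_elem P \<and> P dvd X}"
    unfolding s1 image_image ..
  also have "\<dots> = (\<lambda>P. h (normalize P)) ` {P. prime_elem P \<and> P dvd X}"
    unfolding gassoc_set h_def ..
  also have "\<dots> = h ` {p. prime p \<and> p dvd X}"
    by (subst s2[symmetric]) (simp add: image_image)
  finally have C: "(\<lambda>p. {q. gassoc p q}) ` {p. gprime p \<and> gdvd p (gc X)} = h ` {p. prime p \<and> p dvd X}" .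
  have inj: "inj_on h {p. prime p \<and> p dvd X}"
  proof (rule inj_onI)
    fix N N' assume N: "N \<in> {p. prime p \<and> p dvd X}" and N': "N' \<in> {p. prime p \<and> p dvd X}" and eq: "h N = h N'"
    have "normalize N = N" using N by (auto simp: normalize_prime)
    then have "gc N \<in> h N" by (auto simp: h_def)
    then have "gc N \<in> h N'" using eq by simp
    then obtain Q where "gc N = gc Q" "normalize Q = N'" by (auto simp: h_def)
    then show "N = N'" using \<open>normalize N = N\<close> by (simp add: gc_eq_iff)
  qed
  have "card (h ` {p. prime p \<and> p dvd X}) = card {p. prime p \<and> p dvd X}"
    using inj by (rule card_image)
  then show ?thesis using C prime_factors_dvd[OF X] by simp
qed

theorem theorem2p3:
  fixes z :: complex and t :: int
  assumes "gint z" and "z \<noteq> 0" and "t \<ge> 2" and "I_star 2 z = of_int t"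
  shows "\<exists>(\<gamma>::nat) x. gint x \<and> z = (1 + \<i>) ^ \<gamma> * x \<and>
           (\<exists>n::int. odd n \<and> complex_of_int n = x * cnj x) \<and>
           card ((\<lambda>p. {q. gassoc p q}) ` {p. gprime p \<and> gdvd p x}) = \<gamma> + multiplicity 2 t"
proof -
  obtain Z where zZ: "z = gc Z" using gint_ex assms(1) by blast
  have Z: "Z \<noteq> 0" using assms(2) zZ by simp
  have t: "t \<noteq> 0" using assms(3) by simp
  define g where "g = multiplicity pi1 Z"
  define X where "X = Z div pi1 ^ g"
  have dv: "pi1 ^ g dvd Z" unfolding g_def by (rule multiplicity_dvd)
  have ZX: "Z = pi1 ^ g * X" using dv by (simp add: X_def)
  have X: "X \<noteq> 0" using ZX Z by auto
  have npi: "\<not> pi1 dvd X"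
  proof
    assume "pi1 dvd X"
    then obtain y where "X = pi1 * y" by (auto elim: dvdE)
    then have "pi1 ^ g * X = pi1 ^ Suc g * y" by (simp only: power_Suc2 mult.assoc)
    then have "Z = pi1 ^ Suc g * y" using ZX by (rule trans[rotated])
    then have "pi1 ^ Suc g dvd Z" by (rule dvdI)
    moreover have "\<not> is_unit pi1" using prime_pi1 by (simp add: prime_def prime_elem_def)
    ultimately have "Suc g \<le> multiplicity pi1 Z" using Z by (intro multiplicity_geI)
    then show False unfolding g_def by linarith
  qed
  have oddX: "odd (gN X)" using npi by (simp add: pi1_dvd_iff)
  have zg: "z = (1 + \<i>) ^ g * gc X"
    using ZX zZ by (simp add: gc_mult gc_power gc_pi1)
  have cn: "complex_of_int (gN X) = gc X * cnj (gc X)" by (simp add: cnj_gc_mult)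
  have pf_pow: "prime_factors (pi1 ^ g) \<subseteq> {pi1}"
  proof
    fix p assume "p \<in> prime_factors (pi1 ^ g)"
    then have "prime p" "p dvd pi1 ^ g" by (simp_all add: in_prime_factors_iff)
    then have "p dvd pi1" using prime_dvd_power by blast
    then have "p = pi1" using \<open>prime p\<close> prime_pi1 primes_dvd_imp_eq by blast
    then show "p \<in> {pi1}" by simp
  qed
  have pi1nz: "pi1 \<noteq> 0" using prime_pi1 by simp
  have "prime_factors Z = prime_factors (pi1 ^ g) \<union> prime_factors X"
    by (subst ZX, rule prime_factors_product) (simp_all add: pi1nz X)
  moreover have "pi1 \<notin> prime_factors X" using npi by (simp add: in_prime_factors_iff)
  ultimately have PX: "prime_factors Z - {pi1} = prime_factors X" using pf_pow by blast
  have "delta_star 2 z / (cmod z powi 2) = of_int t" using assms(4) by (simp add: I_star_def)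
  moreover have "cmod z powi 2 = real_of_int (gN Z)" using zZ by (simp add: powi2 of_int_gN)
  moreover have "gN Z \<noteq> 0" using Z by (simp add: gN_eq_0_iff)
  ultimately have "delta_star 2 z = real_of_int t * real_of_int (gN Z)"
    by (simp add: field_simps)
  then have "real_of_int (\<Sum>d\<in>UD Z. gN d) = real_of_int (t * gN Z)"
    using delta_eq[OF Z] zZ by simp
  then have "(\<Sum>d\<in>UD Z. gN d) = t * gN Z" by (simp only: of_int_eq_iff)
  then have "(\<Prod>p\<in>prime_factors Z. gN p ^ multiplicity p Z + 1) = t * (\<Prod>p\<in>prime_factors Z. gN p ^ multiplicity p Z)"
    by (simp add: sum_UD[OF Z] gN_prod_factors[OF Z, symmetric])
  from count_lemma[OF Z t this] have "card (prime_factors X) = g + multiplicity 2 t"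
    by (simp add: PX g_def)
  then have "card ((\<lambda>p. {q. gassoc p q}) ` {p. gprime p \<and> gdvd p (gc X)}) = g + multiplicity 2 t"
    by (simp add: card_classes[OF X])
  then show ?thesis using zg cn oddX by (intro exI[of _ g] exI[of _ "gc X"]) auto
qed

end
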